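(* Let $T>0$, $\lambda>0$, $\phi,\varrho\ge0$, $G\in\mathcal G$. Then $\sup_{t\le T}\|\mathbf D_t^{-1}\|_{\rm op}<\infty$, where $\mathbf D_t=2\lambda\,{\rm id}+\tilde{\mathbf G}_t+\tilde{\mathbf G}_t^*+2\phi\,\mathbf 1_t^*\mathbf 1_t$ on $L^2([0,T],\mathbb R)$.
   Context: $\mathcal G$: nonnegative definite Volterra kernels $G:[0,T]^2\to[0,\infty)$ ($G(t,s)=0$ for $s\ge t$; $\int\int(G(t,s)+G(s,t))f(s)f(t)\ge0$ for all $f\in L^2([0,T],\mathbb R)$) with $\sup_t\int_0^T|G(t,s)|^2ds+\sup_s\int_0^T|G(t,s)|^2dt<\infty$ and $\lim_{h\to0}\int_0^T|G(t+h,s)-G(t,s)|^2ds=0$ for each $t$. $\tilde G(t,s)=2\varrho\mathbb 1_{\{s<t\}}+G(t,s)$; $\tilde{\mathbf G}_t$ has kernel $\tilde G(s,u)\mathbb 1_{\{u\ge t\}}$; $\mathbf 1_t$ has kernel $(u,s)\mapsto\mathbb 1_{\{u\ge s\}}\mathbb 1_{\{s\ge t\}}$; ${}^*$ is the $L^2$-adjoint; $\mathbf D_t$ is invertible; $\|\mathbf G\|_{\rm op}=\sup_{f\neq0}\|\mathbf Gf\|_{L^2}/\|f\|_{L^2}$. *)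

theory Defs
  imports "HOL-Analysis.Analysis"
begin

text \<open>Square-integrable functions on [0,T] (represented by measurable functions; equality
  in L2 is almost-everywhere equality on [0,T]).\<close>
definition L2 :: "real \<Rightarrow> (real \<Rightarrow> real) set" where
  "L2 T = {f. f \<in> borel_measurable lborel \<and> set_integrable lborel {0..T} (\<lambda>x. (f x)\<^sup>2)}"

definition L2norm :: "real \<Rightarrow> (real \<Rightarrow> real) \<Rightarrow> real" where
  "L2norm T f = sqrt (set_lebesgue_integral lborel {0..T} (\<lambda>x. (f x)\<^sup>2))"

definition ae_eq :: "real \<Rightarrow> (real \<Rightarrow> real) \<Rightarrow> (real \<Rightarrow> real) \<Rightarrow> bool" where
  "ae_eq T f g \<longleftrightarrow> (AE x in lborel. x \<in> {0..T} \<longrightarrow> f x = g x)"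

definition kop :: "real \<Rightarrow> (real \<Rightarrow> real \<Rightarrow> real) \<Rightarrow> (real \<Rightarrow> real) \<Rightarrow> (real \<Rightarrow> real)" where
  "kop T K f = (\<lambda>s. set_lebesgue_integral lborel {0..T} (\<lambda>u. K s u * f u))"

definition adjk :: "(real \<Rightarrow> real \<Rightarrow> real) \<Rightarrow> (real \<Rightarrow> real \<Rightarrow> real)" where
  "adjk K = (\<lambda>s u. K u s)"

definition kernel_class :: "real \<Rightarrow> (real \<Rightarrow> real \<Rightarrow> real) \<Rightarrow> bool" where
  "kernel_class T G \<longleftrightarrow>
     (\<lambda>(t, s). G t s) \<in> borel_measurable borel \<and>
     (\<forall>t\<in>{0..T}. \<forall>s\<in>{0..T}. G t s \<ge> 0) \<and>
     (\<forall>t\<in>{0..T}. \<forall>s\<in>{0..T}. s \<ge> t \<longrightarrow> G t s = 0) \<and>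
     (\<forall>f\<in>L2 T.
        (\<integral>t\<in>{0..T}. (\<integral>s\<in>{0..T}. (G t s + G s t) * f s * f t \<partial>lborel) \<partial>lborel) \<ge> 0) \<and>
     (\<exists>M::real. (\<forall>t\<in>{0..T}. (\<integral>\<^sup>+ s\<in>{0..T}. ennreal ((G t s)\<^sup>2) \<partial>lborel) \<le> ennreal M) \<and>
                (\<forall>s\<in>{0..T}. (\<integral>\<^sup>+ t\<in>{0..T}. ennreal ((G t s)\<^sup>2) \<partial>lborel) \<le> ennreal M)) \<and>
     (\<forall>t\<in>{0..T}.
        ((\<lambda>r. \<integral>\<^sup>+ s\<in>{0..T}. ennreal ((G r s - G t s)\<^sup>2) \<partial>lborel) \<longlongrightarrow> 0)
          (at t within {0..T}))"

definition Gtil :: "real \<Rightarrow> (real \<Rightarrow> real \<Rightarrow> real) \<Rightarrow> real \<Rightarrow> real \<Rightarrow> real" where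
  "Gtil \<rho> G t s = 2 * \<rho> * (if s < t then 1 else 0) + G t s"

definition Gtil_t :: "real \<Rightarrow> (real \<Rightarrow> real \<Rightarrow> real) \<Rightarrow> real \<Rightarrow> real \<Rightarrow> real \<Rightarrow> real" where
  "Gtil_t \<rho> G t s u = Gtil \<rho> G s u * (if u \<ge> t then 1 else 0)"

definition one_t :: "real \<Rightarrow> real \<Rightarrow> real \<Rightarrow> real" where
  "one_t t u s = (if u \<ge> s then 1 else 0) * (if s \<ge> t then 1 else 0)"

definition D_op :: "real \<Rightarrow> real \<Rightarrow> real \<Rightarrow> real \<Rightarrow> (real \<Rightarrow> real \<Rightarrow> real) \<Rightarrow> real
                     \<Rightarrow> (real \<Rightarrow> real) \<Rightarrow> (real \<Rightarrow> real)" where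
  "D_op T lam \<phi> \<rho> G t f = (\<lambda>s.
      2 * lam * f s
      + kop T (Gtil_t \<rho> G t) f s
      + kop T (adjk (Gtil_t \<rho> G t)) f s
      + 2 * \<phi> * kop T (adjk (one_t t)) (kop T (one_t t) f) s)"

end

theory Submission imports Defs begin

lemma absmul_le: "\<bar>(a::real) * b\<bar> \<le> (a^2 + b^2)/2"
proof -
  have "0 \<le> (\<bar>a\<bar> - \<bar>b\<bar>)^2" by simp
  then show ?thesis by (simp add: power2_eq_square abs_mult algebra_simps)
qed

lemma mul_le1: "(a::real) * b \<le> (a^2 + b^2)/2"
proof -
  have "0 \<le> (a-b)^2" by simp
  moreover have "(a-b)^2 = a^2 + b^2 - 2*(a*b)" by (simp add: power2_diff)
  ultimately show ?thesis by argo
qed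
lemma mul_le2: "-(((a::real)^2 + b^2)/2) \<le> a * b"
proof -
  have "0 \<le> (a+b)^2" by simp
  moreover have "(a+b)^2 = a^2 + b^2 + 2*(a*b)" by (simp add: power2_sum)
  ultimately show ?thesis by argo
qed

lemma set_integrable_const_Icc: "set_integrable lborel {a..b::real} (\<lambda>_. c::real)"
  by (rule borel_integrable_atLeastAtMost') simp

lemma L2_meas: "h \<in> L2 T \<Longrightarrow> h \<in> borel_measurable borel"
  by (simp add: L2_def)

lemma L2_sq: "h \<in> L2 T \<Longrightarrow> set_integrable lborel {0..T} (\<lambda>x. (h x)^2)"
  by (simp add: L2_def)

lemma L2_L1:
  assumes "h \<in> L2 T" shows "set_integrable lborel {0..T} h"
proof -
  have m[measurable]: "h \<in> borel_measurable borel" using assms by (simp add: L2_def)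
  have "set_integrable lborel {0..T} (\<lambda>x. (1 + (h x)^2)/2)"
    using set_integrable_const_Icc[of 0 T 1] L2_sq[OF assms]
    by (intro set_integrable_divide set_integral_add(1)) auto
  then show ?thesis
  proof (rule set_integrable_bound)
    show "set_borel_measurable lborel {0..T} h" unfolding set_borel_measurable_def by measurable
    show "AE x in lborel. x \<in> {0..T} \<longrightarrow> norm (h x) \<le> norm ((1 + (h x)\<^sup>2) / 2)"
      using absmul_le[of 1 "h x" for x] by (auto intro!: AE_I2 simp: abs_le_iff)
  qed
qed

lemma meas_Ks:
  fixes K :: "real \<Rightarrow> real \<Rightarrow> real"
  assumes "(\<lambda>(s,u). K s u) \<in> borel_measurable borel"
  shows "K s \<in> borel_measurable borel"
proof -
  have "(\<lambda>(s,u). K s u) \<in> borel_measurable (borel \<Otimes>\<^sub>M borel)" using assms by (simp only: borel_prod)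
  from measurable_Pair2[OF this, of s] show ?thesis by simp
qed

lemma meas_Kfs:
  fixes K :: "real \<Rightarrow> real \<Rightarrow> real"
  assumes "(\<lambda>(s,u). K s u) \<in> borel_measurable borel"
  shows "(\<lambda>x. K (fst x) (snd x)) \<in> borel_measurable borel"
  using assms by (simp add: case_prod_beta')

lemma meas_pair_lborel:
  "f \<in> borel_measurable (borel \<Otimes>\<^sub>M borel) \<Longrightarrow> f \<in> borel_measurable (lborel \<Otimes>\<^sub>M (lborel::real measure))"
  by (subst measurable_cong_sets[OF sets_pair_measure_cong[OF sets_lborel sets_lborel] refl]) simp

lemma meas_KPP:
  fixes K :: "real \<Rightarrow> real \<Rightarrow> real"
  assumes "(\<lambda>(s,u). K s u) \<in> borel_measurable borel"
  shows "(\<lambda>x. K (fst x) (snd x)) \<in> borel_measurable (borel \<Otimes>\<^sub>M borel)"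
  using assms by (simp add: case_prod_beta' borel_prod)

lemma row_sq:
  fixes K :: "real \<Rightarrow> real \<Rightarrow> real" and M :: real
  assumes Km[measurable]: "(\<lambda>(s,u). K s u) \<in> borel_measurable borel"
  and M0: "0 \<le> M"
  and Kb: "(\<integral>\<^sup>+u\<in>{0..T}. ennreal ((K s u)\<^sup>2) \<partial>lborel) \<le> ennreal M"
  shows "set_integrable lborel {0..T} (\<lambda>u. (K s u)\<^sup>2)"
    and "(LINT u:{0..T}|lborel. (K s u)\<^sup>2) \<le> M"
proof -
  have [measurable]: "K s \<in> borel_measurable borel"
    by (rule meas_Ks[OF Km])
  have e: "(\<integral>\<^sup>+u. ennreal (indicator {0..T} u *\<^sub>R (K s u)\<^sup>2) \<partial>lborel)
      = (\<integral>\<^sup>+u\<in>{0..T}. ennreal ((K s u)\<^sup>2) \<partial>lborel)"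
    by (auto intro!: nn_integral_cong split: split_indicator)
  show si: "set_integrable lborel {0..T} (\<lambda>u. (K s u)\<^sup>2)"
    unfolding set_integrable_def
  proof (rule integrableI_nonneg)
    show "(\<lambda>x. indicator {0..T} x *\<^sub>R (K s x)\<^sup>2) \<in> borel_measurable lborel" by measurable
    show "AE x in lborel. 0 \<le> indicator {0..T} x *\<^sub>R (K s x)\<^sup>2" by (auto intro!: AE_I2)
    show "(\<integral>\<^sup>+x. ennreal (indicator {0..T} x *\<^sub>R (K s x)\<^sup>2) \<partial>lborel) < \<infinity>"
      using Kb e by (simp add: le_less_trans)
  qed
  have "ennreal (LINT u:{0..T}|lborel. (K s u)\<^sup>2) = (\<integral>\<^sup>+u. ennreal (indicator {0..T} u *\<^sub>R (K s u)\<^sup>2) \<partial>lborel)"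
    unfolding set_lebesgue_integral_def
    using si unfolding set_integrable_def
    by (subst nn_integral_eq_integral) (auto intro!: AE_I2)
  with e Kb have "ennreal (LINT u:{0..T}|lborel. (K s u)\<^sup>2) \<le> ennreal M" by simp
  with M0 show "(LINT u:{0..T}|lborel. (K s u)\<^sup>2) \<le> M"
    by (simp add: ennreal_le_iff)
qed

lemma kop_props:
  fixes K :: "real \<Rightarrow> real \<Rightarrow> real" and M :: real
  assumes Km[measurable]: "(\<lambda>(s,u). K s u) \<in> borel_measurable borel"
  and M0: "0 \<le> M"
  and Kb: "\<And>s. s \<in> {0..T} \<Longrightarrow> (\<integral>\<^sup>+u\<in>{0..T}. ennreal ((K s u)\<^sup>2) \<partial>lborel) \<le> ennreal M"
  and h: "h \<in> L2 T"
  shows kop_int: "\<And>s. s \<in> {0..T} \<Longrightarrow> set_integrable lborel {0..T} (\<lambda>u. K s u * h u)"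
    and kop_meas: "kop T K h \<in> borel_measurable borel"
    and kop_bound: "\<And>s. s \<in> {0..T} \<Longrightarrow> \<bar>kop T K h s\<bar> \<le> (M + (LINT u:{0..T}|lborel. (h u)\<^sup>2))/2"
proof -
  have hm[measurable]: "h \<in> borel_measurable borel" using h by (simp add: L2_def)
  have hs: "set_integrable lborel {0..T} (\<lambda>u. (h u)\<^sup>2)" using h by (simp add: L2_def)
  have Ks[measurable]: "\<And>s. K s \<in> borel_measurable borel"
    by (rule meas_Ks[OF Km])
  have KP[measurable]: "(\<lambda>x. K (fst x) (snd x)) \<in> borel_measurable borel"
    by (rule meas_Kfs[OF Km])
  fix s assume s: "s \<in> {0..T}"
  have ks: "set_integrable lborel {0..T} (\<lambda>u. (K s u)\<^sup>2)" "(LINT u:{0..T}|lborel. (K s u)\<^sup>2) \<le> M"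
    using row_sq[OF Km M0 Kb[OF s]] by auto
  have bi: "set_integrable lborel {0..T} (\<lambda>u. ((K s u)\<^sup>2 + (h u)\<^sup>2)/2)"
    using ks hs by (intro set_integrable_divide set_integral_add(1)) auto
  show si: "set_integrable lborel {0..T} (\<lambda>u. K s u * h u)"
    using bi
  proof (rule set_integrable_bound)
    show "set_borel_measurable lborel {0..T} (\<lambda>u. K s u * h u)"
      unfolding set_borel_measurable_def by measurable
    show "AE x in lborel. x \<in> {0..T} \<longrightarrow> norm (K s x * h x) \<le> norm (((K s x)\<^sup>2 + (h x)\<^sup>2) / 2)"
      using absmul_le[of "K s x" "h x" for x] by (auto intro!: AE_I2)
  qed
  have "(LINT u:{0..T}|lborel. K s u * h u) \<le> (LINT u:{0..T}|lborel. ((K s u)\<^sup>2 + (h u)\<^sup>2)/2)"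
    using si bi by (rule set_integral_mono) (rule mul_le1)
  moreover have "(LINT u:{0..T}|lborel. -(((K s u)\<^sup>2 + (h u)\<^sup>2)/2)) \<le> (LINT u:{0..T}|lborel. K s u * h u)"
    proof (rule set_integral_mono[OF _ si])
    show "set_integrable lborel {0..T} (\<lambda>u. -(((K s u)\<^sup>2 + (h u)\<^sup>2)/2))"
      using set_integrable_mult_right[of "-1" lborel "{0..T}" "\<lambda>u. ((K s u)\<^sup>2 + (h u)\<^sup>2)/2"] bi
      by (simp only: mult_minus1)
  qed (rule mul_le2)
  moreover have "(LINT u:{0..T}|lborel. ((K s u)\<^sup>2 + (h u)\<^sup>2)/2)
      = ((LINT u:{0..T}|lborel. (K s u)\<^sup>2) + (LINT u:{0..T}|lborel. (h u)\<^sup>2))/2"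
    using ks hs by (simp add: set_integral_add(2))
  moreover have "(LINT u:{0..T}|lborel. -(((K s u)\<^sup>2 + (h u)\<^sup>2)/2)) = - (LINT u:{0..T}|lborel. ((K s u)\<^sup>2 + (h u)\<^sup>2)/2)"
    by (rule set_integral_uminus[OF bi])
  ultimately show "\<bar>kop T K h s\<bar> \<le> (M + (LINT u:{0..T}|lborel. (h u)\<^sup>2))/2"
    unfolding kop_def using ks(2) by (intro abs_leI) argo+
next
  have hm[measurable]: "h \<in> borel_measurable borel" using h by (simp add: L2_def)
  have KP[measurable]: "(\<lambda>x. K (fst x) (snd x)) \<in> borel_measurable (borel \<Otimes>\<^sub>M borel)"
    by (rule meas_KPP[OF Km])
  have "(\<lambda>s. \<integral>u. indicator {0..T} u *\<^sub>R (K s u * h u) \<partial>lborel) \<in> borel_measurable lborel"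
  proof (rule lborel.borel_measurable_lebesgue_integral)
    show "(\<lambda>(s,u). indicator {0..T} u *\<^sub>R (K s u * h u)) \<in> borel_measurable (lborel \<Otimes>\<^sub>M lborel)"
      by (rule meas_pair_lborel) (simp add: case_prod_beta', measurable)
  qed
  then show "kop T K h \<in> borel_measurable borel"
    unfolding kop_def set_lebesgue_integral_def by simp
qed


lemma bdd_L2:
  fixes g :: "real \<Rightarrow> real"
  assumes gm: "g \<in> borel_measurable borel" and gb: "\<And>s. s \<in> {0..T} \<Longrightarrow> \<bar>g s\<bar> \<le> B"
  shows "g \<in> L2 T"
proof -
  have [measurable]: "g \<in> borel_measurable borel" by fact
  have "set_integrable lborel {0..T} (\<lambda>x. (g x)\<^sup>2)"
    using set_integrable_const_Icc[of 0 T "B^2"]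
  proof (rule set_integrable_bound)
    show "set_borel_measurable lborel {0..T} (\<lambda>x. (g x)\<^sup>2)"
      unfolding set_borel_measurable_def by measurable
    show "AE x in lborel. x \<in> {0..T} \<longrightarrow> norm ((g x)\<^sup>2) \<le> norm (B^2)"
    proof (rule AE_I2, intro impI)
      fix x assume "x \<in> {0..T}"
      then have "\<bar>g x\<bar> \<le> B" by (rule gb)
      then have "\<bar>g x\<bar>^2 \<le> \<bar>B\<bar>^2" by (intro power_mono) auto
      then show "norm ((g x)\<^sup>2) \<le> norm (B^2)" by simp
    qed
  qed
  then show ?thesis unfolding L2_def using gm by simp
qed

lemma bdd_mult_int:
  fixes g f :: "real \<Rightarrow> real"
  assumes gm: "g \<in> borel_measurable borel" and gb: "\<And>s. s \<in> {0..T} \<Longrightarrow> \<bar>g s\<bar> \<le> B"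
    and f: "f \<in> L2 T"
  shows "set_integrable lborel {0..T} (\<lambda>s. g s * f s)"
proof -
  have [measurable]: "g \<in> borel_measurable borel" by fact
  have [measurable]: "f \<in> borel_measurable borel" using f by (simp add: L2_def)
  have "set_integrable lborel {0..T} (\<lambda>s. B * \<bar>f s\<bar>)"
    using set_integrable_abs[OF L2_L1[OF f]] by simp
  then show ?thesis
  proof (rule set_integrable_bound)
    show "set_borel_measurable lborel {0..T} (\<lambda>s. g s * f s)"
      unfolding set_borel_measurable_def by measurable
    show "AE x in lborel. x \<in> {0..T} \<longrightarrow> norm (g x * f x) \<le> norm (B * \<bar>f x\<bar>)"
    proof (rule AE_I2, intro impI)
      fix x assume "x \<in> {0..T}"
      then have "\<bar>g x\<bar> \<le> B" by (rule gb)
      then have "\<bar>g x\<bar> * \<bar>f x\<bar> \<le> B * \<bar>f x\<bar>" by (intro mult_right_mono) auto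
      then show "norm (g x * f x) \<le> norm (B * \<bar>f x\<bar>)"
        by (simp add: abs_mult) (smt (verit) mult_right_mono abs_ge_zero)
    qed
  qed
qed

lemma nn_le_from_int:
  fixes k B :: "real \<Rightarrow> real"
  assumes Bi: "set_integrable lborel S B" and kB: "\<And>u. u \<in> S \<Longrightarrow> (k u)\<^sup>2 \<le> B u"
    and c: "(LINT u:S|lborel. B u) \<le> c"
  shows "(\<integral>\<^sup>+u\<in>S. ennreal ((k u)\<^sup>2) \<partial>lborel) \<le> ennreal c"
proof -
  have "(\<integral>\<^sup>+u\<in>S. ennreal ((k u)\<^sup>2) \<partial>lborel) \<le> (\<integral>\<^sup>+u. ennreal (indicator S u *\<^sub>R B u) \<partial>lborel)"
    by (rule nn_integral_mono) (auto split: split_indicator intro!: ennreal_leI kB)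
  also have "\<dots> = ennreal (LINT u:S|lborel. B u)"
    unfolding set_lebesgue_integral_def using Bi unfolding set_integrable_def
    apply (subst nn_integral_eq_integral)
      apply assumption
    using kB by (auto intro!: AE_I2 split: split_indicator intro: order_trans[OF zero_le_power2])
  also have "\<dots> \<le> ennreal c" using c by (rule ennreal_leI)
  finally show ?thesis .
qed


lemma kc_meas: "kernel_class T G \<Longrightarrow> (\<lambda>(t, s). G t s) \<in> borel_measurable borel"
  by (simp add: kernel_class_def)

lemma kc_volterra: "kernel_class T G \<Longrightarrow> t \<in> {0..T} \<Longrightarrow> s \<in> {0..T} \<Longrightarrow> t \<le> s \<Longrightarrow> G t s = 0"
  by (simp add: kernel_class_def)

lemma kc_posdef: "kernel_class T G \<Longrightarrow> f \<in> L2 T \<Longrightarrow>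
   0 \<le> (\<integral>t\<in>{0..T}. (\<integral>s\<in>{0..T}. (G t s + G s t) * f s * f t \<partial>lborel) \<partial>lborel)"
  by (simp add: kernel_class_def)

lemma kc_bounds:
  assumes "kernel_class T G"
  obtains M where "0 \<le> M"
    "\<And>t. t \<in> {0..T} \<Longrightarrow> (\<integral>\<^sup>+ s\<in>{0..T}. ennreal ((G t s)\<^sup>2) \<partial>lborel) \<le> ennreal M"
    "\<And>s. s \<in> {0..T} \<Longrightarrow> (\<integral>\<^sup>+ t\<in>{0..T}. ennreal ((G t s)\<^sup>2) \<partial>lborel) \<le> ennreal M"
proof -
  from assms obtain M where
    a: "\<forall>t\<in>{0..T}. (\<integral>\<^sup>+ s\<in>{0..T}. ennreal ((G t s)\<^sup>2) \<partial>lborel) \<le> ennreal M" and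
    b: "\<forall>s\<in>{0..T}. (\<integral>\<^sup>+ t\<in>{0..T}. ennreal ((G t s)\<^sup>2) \<partial>lborel) \<le> ennreal M"
    unfolding kernel_class_def by blast
  have e: "ennreal M \<le> ennreal (max M 0)" by (rule ennreal_leI) simp
  show ?thesis
  proof (rule that[of "max M 0"])
    fix t assume "t \<in> {0..T}"
    with a have "(\<integral>\<^sup>+ s\<in>{0..T}. ennreal ((G t s)\<^sup>2) \<partial>lborel) \<le> ennreal M" by blast
    then show "(\<integral>\<^sup>+ s\<in>{0..T}. ennreal ((G t s)\<^sup>2) \<partial>lborel) \<le> ennreal (max M 0)"
      using e by (rule order_trans)
  next
    fix s assume "s \<in> {0..T}"
    with b have "(\<integral>\<^sup>+ t\<in>{0..T}. ennreal ((G t s)\<^sup>2) \<partial>lborel) \<le> ennreal M" by blast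
    then show "(\<integral>\<^sup>+ t\<in>{0..T}. ennreal ((G t s)\<^sup>2) \<partial>lborel) \<le> ennreal (max M 0)"
      using e by (rule order_trans)
  qed simp
qed

lemma meas_swap:
  fixes K :: "real \<Rightarrow> real \<Rightarrow> real"
  assumes "(\<lambda>(s,u). K s u) \<in> borel_measurable borel"
  shows "(\<lambda>(s,u). K u s) \<in> borel_measurable borel"
proof -
  have "(\<lambda>(s,u). K s u) \<in> borel_measurable (borel \<Otimes>\<^sub>M borel)" using assms by (simp only: borel_prod)
  from measurable_comp[OF measurable_pair_swap' this]
  have "(\<lambda>(s,u). K u s) \<in> borel_measurable (borel \<Otimes>\<^sub>M borel)" by (simp add: comp_def case_prod_beta')
  then show ?thesis by (simp only: borel_prod)
qed

lemma meas_Gtil_t: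
  fixes G :: "real \<Rightarrow> real \<Rightarrow> real"
  assumes "(\<lambda>(s,u). G s u) \<in> borel_measurable borel"
  shows "(\<lambda>(s,u). Gtil_t \<rho> G t s u) \<in> borel_measurable borel"
proof -
  have [measurable]: "(\<lambda>x. G (fst x) (snd x)) \<in> borel_measurable (borel \<Otimes>\<^sub>M borel)"
    by (rule meas_KPP[OF assms])
  have "(\<lambda>x. Gtil_t \<rho> G t (fst x) (snd x)) \<in> borel_measurable (borel \<Otimes>\<^sub>M borel)"
    unfolding Gtil_t_def Gtil_def by measurable
  then show ?thesis by (simp add: borel_prod case_prod_beta')
qed

lemma meas_one_t: "(\<lambda>(s,u). one_t t s u) \<in> borel_measurable borel"
proof -
  have "(\<lambda>x. one_t t (fst x) (snd x)) \<in> borel_measurable (borel \<Otimes>\<^sub>M borel)"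
    unfolding one_t_def by measurable
  then show ?thesis by (simp add: borel_prod case_prod_beta')
qed

lemma sq_sum_le: "((a::real) + b)^2 \<le> 2 * a^2 + 2 * b^2"
proof -
  have "0 \<le> (a - b)^2" by simp
  moreover have "(a+b)^2 = a^2 + b^2 + 2*(a*b)" by (simp add: power2_sum)
  moreover have "(a-b)^2 = a^2 + b^2 - 2*(a*b)" by (simp add: power2_diff)
  ultimately show ?thesis by argo
qed

lemma row_bound_gen:
  fixes K K' :: "real \<Rightarrow> real \<Rightarrow> real"
  assumes Km: "(\<lambda>(s,u). K s u) \<in> borel_measurable borel" and M0: "0 \<le> M"
  and Kb: "\<And>s. s \<in> {0..T} \<Longrightarrow> (\<integral>\<^sup>+u\<in>{0..T}. ennreal ((K s u)\<^sup>2) \<partial>lborel) \<le> ennreal M"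
  and pw: "\<And>s u. s \<in> {0..T} \<Longrightarrow> u \<in> {0..T} \<Longrightarrow> (K' s u)\<^sup>2 \<le> c0 + 2 * (K s u)\<^sup>2"
  and s: "s \<in> {0..T}"
  shows "(\<integral>\<^sup>+u\<in>{0..T}. ennreal ((K' s u)\<^sup>2) \<partial>lborel) \<le> ennreal ((LINT u:{0..T}|lborel. c0) + 2 * M)"
proof -
  have ks: "set_integrable lborel {0..T} (\<lambda>u. (K s u)\<^sup>2)" "(LINT u:{0..T}|lborel. (K s u)\<^sup>2) \<le> M"
    using row_sq[OF Km M0 Kb[OF s]] by auto
  have i2: "set_integrable lborel {0..T} (\<lambda>u. 2 * (K s u)\<^sup>2)"
    using ks(1) by (rule set_integrable_mult_right)
  show ?thesis
  proof (rule nn_le_from_int)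
    show "set_integrable lborel {0..T} (\<lambda>u. c0 + 2 * (K s u)\<^sup>2)"
      using set_integrable_const_Icc i2 by (rule set_integral_add(1))
    show "\<And>u. u \<in> {0..T} \<Longrightarrow> (K' s u)\<^sup>2 \<le> c0 + 2 * (K s u)\<^sup>2" using pw s by auto
    have "(LINT u:{0..T}|lborel. c0 + 2 * (K s u)\<^sup>2) = (LINT u:{0..T}|lborel. c0) + 2 * (LINT u:{0..T}|lborel. (K s u)\<^sup>2)"
      using set_integral_add(2)[OF set_integrable_const_Icc i2] by simp
    then show "(LINT u:{0..T}|lborel. c0 + 2 * (K s u)\<^sup>2) \<le> (LINT u:{0..T}|lborel. c0) + 2 * M"
      using ks(2) by simp
  qed
qed


lemma Q_nonneg:
  assumes kc: "kernel_class T G" and r: "0 \<le> \<rho>" and h: "h \<in> L2 T"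
  shows "0 \<le> (LINT s:{0..T}|lborel. (LINT u:{0..T}|lborel. (Gtil \<rho> G s u + Gtil \<rho> G u s) * h u * h s))"
proof -
  obtain M where M0: "0 \<le> M"
    and rowG: "\<And>t. t \<in> {0..T} \<Longrightarrow> (\<integral>\<^sup>+ s\<in>{0..T}. ennreal ((G t s)\<^sup>2) \<partial>lborel) \<le> ennreal M"
    and colG: "\<And>s. s \<in> {0..T} \<Longrightarrow> (\<integral>\<^sup>+ t\<in>{0..T}. ennreal ((G t s)\<^sup>2) \<partial>lborel) \<le> ennreal M"
    using kc_bounds[OF kc] by blast
  have Gm: "(\<lambda>(s,u). G s u) \<in> borel_measurable borel" using kc_meas[OF kc] .
  have GTm: "(\<lambda>(s,u). G u s) \<in> borel_measurable borel" by (rule meas_swap[OF Gm])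
  have colG': "\<And>s. s \<in> {0..T} \<Longrightarrow> (\<integral>\<^sup>+u\<in>{0..T}. ennreal (((\<lambda>s u. G u s) s u)\<^sup>2) \<partial>lborel) \<le> ennreal M"
    using colG by simp
  have hm[measurable]: "h \<in> borel_measurable borel" using h by (simp add: L2_def)
  have hL1: "set_integrable lborel {0..T} h" by (rule L2_L1[OF h])
  define I where "I = (LINT u:{0..T}|lborel. h u)"
  define P where "P = (\<lambda>s. (kop T G h s + kop T (\<lambda>s u. G u s) h s) * h s)"
  have i1: "\<And>s. s \<in> {0..T} \<Longrightarrow> set_integrable lborel {0..T} (\<lambda>u. G s u * h u)"
    using kop_int[OF Gm M0 rowG h] by blast
  have i2: "\<And>s. s \<in> {0..T} \<Longrightarrow> set_integrable lborel {0..T} (\<lambda>u. G u s * h u)"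
    using kop_int[OF GTm M0 colG' h] by simp
  have inner: "(LINT u:{0..T}|lborel. (Gtil \<rho> G s u + Gtil \<rho> G u s) * h u * h s) = 2*\<rho>*I*h s + P s"
    if s: "s \<in> {0..T}" for s
  proof -
    define ind where "ind = (\<lambda>u. (if u < s then 1 else 0) + (if s < u then 1 else 0) :: real)"
    have indm[measurable]: "ind \<in> borel_measurable borel" unfolding ind_def by measurable
    have i3: "set_integrable lborel {0..T} (\<lambda>u. ind u * h u)"
      by (rule bdd_mult_int[OF indm _ h, of 2]) (auto simp: ind_def)
    have pw: "(Gtil \<rho> G s u + Gtil \<rho> G u s) * h u * h s
        = (2*\<rho>*h s) * (ind u * h u) + (h s * (G s u * h u) + h s * (G u s * h u))" for u
      by (simp add: Gtil_def ind_def algebra_simps)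
    have "(LINT u:{0..T}|lborel. (Gtil \<rho> G s u + Gtil \<rho> G u s) * h u * h s)
       = (LINT u:{0..T}|lborel. (2*\<rho>*h s) * (ind u * h u) + (h s * (G s u * h u) + h s * (G u s * h u)))"
      by (simp only: pw)
    also have "\<dots> = (2*\<rho>*h s) * (LINT u:{0..T}|lborel. ind u * h u)
        + (h s * (LINT u:{0..T}|lborel. G s u * h u) + h s * (LINT u:{0..T}|lborel. G u s * h u))"
      using i1[OF s] i2[OF s] i3
      by (subst set_integral_add(2); (subst set_integral_add(2))?) (auto intro: set_integral_add(1))
    also have "(LINT u:{0..T}|lborel. ind u * h u) = I"
      unfolding I_def
    proof (rule set_lebesgue_integral_cong_AE)
      show "AE x\<in>{0..T} in lborel. ind x * h x = h x"
        using AE_lborel_singleton[of s] by eventually_elim (auto simp: ind_def)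
    qed measurable
    finally show ?thesis unfolding P_def kop_def by (simp add: algebra_simps)
  qed
  have Pint: "P s = (LINT u:{0..T}|lborel. (G s u + G u s) * h u * h s)" if s: "s \<in> {0..T}" for s
  proof -
    have "(LINT u:{0..T}|lborel. (G s u + G u s) * h u * h s)
       = (LINT u:{0..T}|lborel. h s * (G s u * h u) + h s * (G u s * h u))"
      by (simp add: algebra_simps)
    also have "\<dots> = h s * (LINT u:{0..T}|lborel. G s u * h u) + h s * (LINT u:{0..T}|lborel. G u s * h u)"
      using i1[OF s] i2[OF s] by (subst set_integral_add(2)) auto
    finally show ?thesis unfolding P_def kop_def by (simp add: algebra_simps)
  qed
  have Pi: "set_integrable lborel {0..T} P"
    unfolding P_def
  proof (rule bdd_mult_int[OF _ _ h])
    show "(\<lambda>s. kop T G h s + kop T (\<lambda>s u. G u s) h s) \<in> borel_measurable borel"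
      using kop_meas[OF Gm M0 rowG h] kop_meas[OF GTm M0 colG' h] by measurable
    fix s assume s: "s \<in> {0..T}"
    have "\<bar>kop T G h s\<bar> \<le> (M + (LINT u:{0..T}|lborel. (h u)\<^sup>2))/2"
      using kop_bound[OF Gm M0 rowG h s] .
    moreover have "\<bar>kop T (\<lambda>s u. G u s) h s\<bar> \<le> (M + (LINT u:{0..T}|lborel. (h u)\<^sup>2))/2"
      using kop_bound[OF GTm M0 colG' h s] .
    ultimately show "\<bar>kop T G h s + kop T (\<lambda>s u. G u s) h s\<bar> \<le> M + (LINT u:{0..T}|lborel. (h u)\<^sup>2)"
      using abs_triangle_ineq[of "kop T G h s" "kop T (\<lambda>s u. G u s) h s"] by argo
  qed
  have "(LINT s:{0..T}|lborel. (LINT u:{0..T}|lborel. (Gtil \<rho> G s u + Gtil \<rho> G u s) * h u * h s))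
      = (LINT s:{0..T}|lborel. 2*\<rho>*I*h s + P s)"
    by (rule set_lebesgue_integral_cong) (simp, use inner in blast)
  also have "\<dots> = 2*\<rho>*I*I + (LINT s:{0..T}|lborel. P s)"
    using hL1 Pi unfolding I_def by (subst set_integral_add(2)) auto
  also have "(LINT s:{0..T}|lborel. P s) = (LINT s:{0..T}|lborel. (LINT u:{0..T}|lborel. (G s u + G u s) * h u * h s))"
    by (rule set_lebesgue_integral_cong) (simp, use Pint in blast)
  finally have eq: "(LINT s:{0..T}|lborel. (LINT u:{0..T}|lborel. (Gtil \<rho> G s u + Gtil \<rho> G u s) * h u * h s))
      = 2*\<rho>*(I*I) + (LINT s:{0..T}|lborel. (LINT u:{0..T}|lborel. (G s u + G u s) * h u * h s))"
    by simp
  have "0 \<le> (LINT s:{0..T}|lborel. (LINT u:{0..T}|lborel. (G s u + G u s) * h u * h s))"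
    using kc_posdef[OF kc h] .
  moreover have "0 \<le> 2*\<rho>*(I*I)" using r by simp
  ultimately show ?thesis unfolding eq by simp
qed


lemma LINT_one_nonneg: "0 \<le> (LINT u:{0..T}|lborel. (1::real))"
  unfolding set_lebesgue_integral_def by (rule integral_nonneg_AE) (auto intro!: AE_I2)

lemma one_t_props:
  fixes t T :: real
  shows "(\<lambda>(s,u). one_t t s u) \<in> borel_measurable borel"
    and "(\<lambda>(s,u). adjk (one_t t) s u) \<in> borel_measurable borel"
    and "\<And>s. s \<in> {0..T} \<Longrightarrow> (\<integral>\<^sup>+u\<in>{0..T}. ennreal ((one_t t s u)\<^sup>2) \<partial>lborel) \<le> ennreal ((LINT u:{0..T}|lborel. 1) + 2 * 0)"
    and "\<And>s. s \<in> {0..T} \<Longrightarrow> (\<integral>\<^sup>+u\<in>{0..T}. ennreal ((adjk (one_t t) s u)\<^sup>2) \<partial>lborel) \<le> ennreal ((LINT u:{0..T}|lborel. 1) + 2 * 0)"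
proof -
  show m: "(\<lambda>(s,u). one_t t s u) \<in> borel_measurable borel" by (rule meas_one_t)
  show "(\<lambda>(s,u). adjk (one_t t) s u) \<in> borel_measurable borel"
    unfolding adjk_def by (rule meas_swap[OF m])
  have z: "(\<lambda>(s,u). (\<lambda>s u. 0::real) s u) \<in> borel_measurable borel" by simp
  fix s assume s: "s \<in> {0..T}"
  show "(\<integral>\<^sup>+u\<in>{0..T}. ennreal ((one_t t s u)\<^sup>2) \<partial>lborel) \<le> ennreal ((LINT u:{0..T}|lborel. 1) + 2 * 0)"
    by (rule row_bound_gen[OF z order_refl _ _ s]) (auto simp: one_t_def)
  show "(\<integral>\<^sup>+u\<in>{0..T}. ennreal ((adjk (one_t t) s u)\<^sup>2) \<partial>lborel) \<le> ennreal ((LINT u:{0..T}|lborel. 1) + 2 * 0)"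
    by (rule row_bound_gen[OF z order_refl _ _ s]) (auto simp: one_t_def adjk_def)
qed

lemma nested_eq:
  fixes \<psi> :: "real \<Rightarrow> real \<Rightarrow> real"
  shows "(LINT s:A|lborel. (LINT u:B|lborel. \<psi> s u))
       = (\<integral>s. (\<integral>u. indicator A s * indicator B u * \<psi> s u \<partial>lborel) \<partial>lborel)"
  unfolding set_lebesgue_integral_def
  by (rule Bochner_Integration.integral_cong[OF refl])
    (simp only: real_scaleR_def integral_mult_right_zero[symmetric] mult.assoc)

lemma C_part:
  assumes f: "f \<in> L2 T"
  shows "set_integrable lborel {0..T} (\<lambda>s. kop T (adjk (one_t t)) (kop T (one_t t) f) s * f s)"
    and "0 \<le> (LINT s:{0..T}|lborel. kop T (adjk (one_t t)) (kop T (one_t t) f) s * f s)"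
proof -
  define M1 :: real where "M1 = (LINT u:{0..T}|lborel. 1) + 2 * 0"
  have M10: "0 \<le> M1" unfolding M1_def using LINT_one_nonneg by simp
  note op1 = one_t_props(1)[where t=t] and op2 = one_t_props(2)[where t=t]
  note op3 = one_t_props(3)[where t=t and T=T, folded M1_def]
  note op4 = one_t_props(4)[where t=t and T=T, folded M1_def]
  have fm[measurable]: "f \<in> borel_measurable borel" using f by (simp add: L2_def)
  define F where "F = kop T (one_t t) f"
  define BF where "BF = (M1 + (LINT u:{0..T}|lborel. (f u)\<^sup>2))/2"
  have Fm[measurable]: "F \<in> borel_measurable borel"
    unfolding F_def by (rule kop_meas[OF op1 M10 op3 f])
  have Fb: "\<And>s. s \<in> {0..T} \<Longrightarrow> \<bar>F s\<bar> \<le> BF"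
    unfolding F_def BF_def by (rule kop_bound[OF op1 M10 op3 f])
  have FL2: "F \<in> L2 T" by (rule bdd_L2[OF Fm Fb])
  have BF0: "0 \<le> BF" using Fb[of 0] by (cases "0 \<le> T") (auto intro: order_trans[OF abs_ge_zero],
       simp add: BF_def M10 set_lebesgue_integral_def)
  define C where "C = kop T (adjk (one_t t)) F"
  have Cm: "C \<in> borel_measurable borel"
    unfolding C_def by (rule kop_meas[OF op2 M10 op4 FL2])
  have Cb: "\<And>s. s \<in> {0..T} \<Longrightarrow> \<bar>C s\<bar> \<le> (M1 + (LINT u:{0..T}|lborel. (F u)\<^sup>2))/2"
    unfolding C_def by (rule kop_bound[OF op2 M10 op4 FL2])
  show "set_integrable lborel {0..T} (\<lambda>s. kop T (adjk (one_t t)) (kop T (one_t t) f) s * f s)"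
    using bdd_mult_int[OF Cm Cb f] unfolding C_def F_def .
  define \<phi> where "\<phi> = (\<lambda>s u. indicator {0..T} s * indicator {0..T} u * (one_t t u s * F u * f s) :: real)"
  define \<beta> where "\<beta> = (\<lambda>s u. (indicator {0..T} s * \<bar>f s\<bar>) * (indicator {0..T} u * BF) :: real)"
  have fL1: "integrable lborel (\<lambda>s. indicator {0..T} s * \<bar>f s\<bar>)"
    using set_integrable_abs[OF L2_L1[OF f]] unfolding set_integrable_def by simp
  have cL1: "integrable lborel (\<lambda>u. indicator {0..T} u * BF)"
    using set_integrable_const_Icc[of 0 T BF] unfolding set_integrable_def by simp
  have \<beta>i: "integrable (lborel \<Otimes>\<^sub>M lborel) (case_prod \<beta>)"
  proof (rule lborel_pair.Fubini_integrable)
    show "case_prod \<beta> \<in> borel_measurable (lborel \<Otimes>\<^sub>M lborel)"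
      by (rule meas_pair_lborel) (simp add: \<beta>_def case_prod_beta', measurable)
    have "(\<lambda>s. \<integral>u. norm (case_prod \<beta> (s, u)) \<partial>lborel)
        = (\<lambda>s. (indicator {0..T} s * \<bar>f s\<bar>) * (\<integral>u. indicator {0..T} u * BF \<partial>lborel))"
      by (rule ext, subst integral_mult_right_zero[symmetric])
        (auto simp: \<beta>_def abs_mult BF0 intro!: Bochner_Integration.integral_cong split: split_indicator)
    then show "integrable lborel (\<lambda>s. \<integral>u. norm (case_prod \<beta> (s, u)) \<partial>lborel)"
      using fL1 by simp
    show "AE s in lborel. integrable lborel (\<lambda>u. case_prod \<beta> (s, u))"
      using cL1 by (auto simp: \<beta>_def intro!: AE_I2)
  qed
  have \<phi>i: "integrable (lborel \<Otimes>\<^sub>M lborel) (case_prod \<phi>)"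
  proof (rule Bochner_Integration.integrable_bound[OF \<beta>i])
    show "case_prod \<phi> \<in> borel_measurable (lborel \<Otimes>\<^sub>M lborel)"
      by (rule meas_pair_lborel) (simp add: \<phi>_def one_t_def case_prod_beta', measurable)
    show "AE x in lborel \<Otimes>\<^sub>M lborel. norm (case_prod \<phi> x) \<le> norm (case_prod \<beta> x)"
    proof (rule AE_I2)
      fix x :: "real \<times> real"
      obtain s u where x: "x = (s, u)" by (cases x)
      show "norm (case_prod \<phi> x) \<le> norm (case_prod \<beta> x)"
      proof (cases "s \<in> {0..T} \<and> u \<in> {0..T}")
        case True
        then have "\<bar>F u\<bar> \<le> BF" using Fb by blast
        moreover have "\<bar>one_t t u s\<bar> \<le> 1" by (simp add: one_t_def)
        ultimately have "\<bar>one_t t u s\<bar> * \<bar>F u\<bar> \<le> 1 * BF"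
          by (intro mult_mono) auto
        then have "\<bar>one_t t u s\<bar> * \<bar>F u\<bar> * \<bar>f s\<bar> \<le> BF * \<bar>f s\<bar>"
          by (simp add: mult_right_mono)
        then show ?thesis using True BF0 by (simp add: x \<phi>_def \<beta>_def abs_mult mult_ac)
      next
        case False
        then show ?thesis by (auto simp: x \<phi>_def \<beta>_def)
      qed
    qed
  qed
  have "(LINT s:{0..T}|lborel. C s * f s) = (LINT s:{0..T}|lborel. (LINT u:{0..T}|lborel. one_t t u s * F u * f s))"
  proof (rule set_lebesgue_integral_cong)
    show "\<forall>s. s \<in> {0..T} \<longrightarrow> C s * f s = (LINT u:{0..T}|lborel. one_t t u s * F u * f s)"
      by (simp add: C_def kop_def adjk_def)
  qed simp
  also have "\<dots> = (\<integral>s. (\<integral>u. \<phi> s u \<partial>lborel) \<partial>lborel)"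
    unfolding nested_eq \<phi>_def ..
  also have "\<dots> = (\<integral>u. (\<integral>s. \<phi> s u \<partial>lborel) \<partial>lborel)"
    by (rule lborel_pair.Fubini_integral[OF \<phi>i, symmetric])
  also have "\<dots> = (\<integral>u. (\<integral>s. indicator {0..T} u * indicator {0..T} s * (one_t t u s * f s * F u) \<partial>lborel) \<partial>lborel)"
    unfolding \<phi>_def by (simp add: mult_ac)
  also have "\<dots> = (LINT u:{0..T}|lborel. (LINT s:{0..T}|lborel. one_t t u s * f s * F u))"
    unfolding nested_eq ..
  also have "\<dots> = (LINT u:{0..T}|lborel. F u * F u)"
  proof (rule set_lebesgue_integral_cong)
    show "\<forall>u. u \<in> {0..T} \<longrightarrow> (LINT s:{0..T}|lborel. one_t t u s * f s * F u) = F u * F u"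
      by (simp add: F_def kop_def)
  qed simp
  finally have eqC: "(LINT s:{0..T}|lborel. C s * f s) = (LINT u:{0..T}|lborel. F u * F u)" .
  have "0 \<le> (LINT u:{0..T}|lborel. F u * F u)"
    unfolding set_lebesgue_integral_def by (rule integral_nonneg_AE) (simp add: split: split_indicator)
  then show "0 \<le> (LINT s:{0..T}|lborel. kop T (adjk (one_t t)) (kop T (one_t t) f) s * f s)"
    using eqC unfolding C_def F_def by simp
qed


lemma LINT_const_nonneg: "0 \<le> (c::real) \<Longrightarrow> 0 \<le> (LINT u:{0..T}|lborel. c)"
  unfolding set_lebesgue_integral_def by (rule integral_nonneg_AE) (auto intro!: AE_I2)

lemma L2_prod_int:
  assumes f: "f \<in> L2 T" and g: "g \<in> L2 T"
  shows "set_integrable lborel {0..T} (\<lambda>s. g s * f s)"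
proof -
  have [measurable]: "f \<in> borel_measurable borel" "g \<in> borel_measurable borel"
    using f g by (auto simp: L2_def)
  have "set_integrable lborel {0..T} (\<lambda>x. ((g x)\<^sup>2 + (f x)\<^sup>2)/2)"
    using L2_sq[OF g] L2_sq[OF f] by (intro set_integrable_divide set_integral_add(1)) auto
  then show ?thesis
  proof (rule set_integrable_bound)
    show "set_borel_measurable lborel {0..T} (\<lambda>s. g s * f s)"
      unfolding set_borel_measurable_def by measurable
    show "AE x in lborel. x \<in> {0..T} \<longrightarrow> norm (g x * f x) \<le> norm (((g x)\<^sup>2 + (f x)\<^sup>2) / 2)"
      using absmul_le[of "g x" "f x" for x] by (auto intro!: AE_I2)
  qed
qed

lemma gf_le:
  fixes lam f g :: real
  assumes "0 < lam"
  shows "g * f \<le> lam * f^2 + g^2 / (4 * lam)"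
proof -
  have "0 \<le> (2*lam*f - g)^2" by simp
  moreover have "(2*lam*f - g)^2 = 4*lam*(lam*f^2) + g^2 - 4*lam*(g*f)"
    by (simp add: power2_eq_square algebra_simps)
  ultimately have "4*lam*(g*f) \<le> 4*lam*(lam*f^2) + g^2" by argo
  then have "4*lam*(g*f) \<le> 4*lam*(lam*f^2 + g^2/(4*lam))"
    using assms by (simp add: algebra_simps)
  then show ?thesis using assms by (simp add: mult_le_cancel_left_pos)
qed

lemma Gtil_t_sq:
  assumes r: "0 \<le> \<rho>"
  shows "(Gtil_t \<rho> G t s u)\<^sup>2 \<le> 8 * \<rho>\<^sup>2 + 2 * (G s u)\<^sup>2"
proof -
  have a: "(2*\<rho> + G s u)\<^sup>2 \<le> 8 * \<rho>\<^sup>2 + 2 * (G s u)\<^sup>2"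
    using sq_sum_le[of "2*\<rho>" "G s u"] by (simp add: power_mult_distrib)
  have b: "(G s u)\<^sup>2 \<le> 8 * \<rho>\<^sup>2 + 2 * (G s u)\<^sup>2"
    by (simp add: add_nonneg_nonneg order_trans[OF _ le_add_same_cancel2[THEN iffD2]]) 
  show ?thesis
    unfolding Gtil_t_def Gtil_def using a b by (auto simp: zero_le_mult_iff)
qed

lemma pw_id:
  assumes vol: "\<And>a b. a \<in> {0..T} \<Longrightarrow> b \<in> {0..T} \<Longrightarrow> a \<le> b \<Longrightarrow> G a b = 0"
    and s: "s \<in> {0..T}" and u: "u \<in> {0..T}"
  shows "(Gtil_t \<rho> G t s u + Gtil_t \<rho> G t u s) * f u * f s
     = (Gtil \<rho> G s u + Gtil \<rho> G u s) * (if t \<le> u then f u else 0) * (if t \<le> s then f s else 0)"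
  using vol[OF s u] vol[OF u s]
  by (cases "t \<le> u"; cases "t \<le> s"; cases "s \<le> u"; cases "u \<le> s") (auto simp: Gtil_t_def Gtil_def)


theorem lemma7p2:
  fixes T lam \<phi> \<rho> :: real and G :: "real \<Rightarrow> real \<Rightarrow> real"
  assumes "T > 0" and "lam > 0" and "\<phi> \<ge> 0" and "\<rho> \<ge> 0"
    and "kernel_class T G"
    and invertible: "\<forall>t\<in>{0..T}.
           (\<forall>g\<in>L2 T. \<exists>f\<in>L2 T. ae_eq T (D_op T lam \<phi> \<rho> G t f) g) \<and>
           (\<forall>f1\<in>L2 T. \<forall>f2\<in>L2 T.
              ae_eq T (D_op T lam \<phi> \<rho> G t f1) (D_op T lam \<phi> \<rho> G t f2) \<longrightarrow> ae_eq T f1 f2)"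
  shows "\<exists>C::real. \<forall>t\<in>{0..T}. \<forall>f\<in>L2 T. \<forall>g\<in>L2 T.
           ae_eq T (D_op T lam \<phi> \<rho> G t f) g \<longrightarrow> L2norm T f \<le> C * L2norm T g"
proof (intro exI[of _ "1/(2*lam)"] ballI impI)
  note kc = assms(5)
  have lam: "0 < lam" and ph: "0 \<le> \<phi>" and r: "0 \<le> \<rho>" using assms by auto
  fix t f g assume t: "t \<in> {0..T}" and f: "f \<in> L2 T" and g: "g \<in> L2 T"
    and ae: "ae_eq T (D_op T lam \<phi> \<rho> G t f) g"
  obtain M where M0: "0 \<le> M"
    and rowG: "\<And>t. t \<in> {0..T} \<Longrightarrow> (\<integral>\<^sup>+ s\<in>{0..T}. ennreal ((G t s)\<^sup>2) \<partial>lborel) \<le> ennreal M"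
    and colG: "\<And>s. s \<in> {0..T} \<Longrightarrow> (\<integral>\<^sup>+ t\<in>{0..T}. ennreal ((G t s)\<^sup>2) \<partial>lborel) \<le> ennreal M"
    using kc_bounds[OF kc] by blast
  have Gm: "(\<lambda>(s,u). G s u) \<in> borel_measurable borel" using kc_meas[OF kc] .
  have GTm: "(\<lambda>(s,u). G u s) \<in> borel_measurable borel" by (rule meas_swap[OF Gm])
  have colG': "\<And>s. s \<in> {0..T} \<Longrightarrow> (\<integral>\<^sup>+u\<in>{0..T}. ennreal (((\<lambda>s u. G u s) s u)\<^sup>2) \<partial>lborel) \<le> ennreal M"
    using colG by simp
  have fm[measurable]: "f \<in> borel_measurable borel" using f by (simp add: L2_def)
  have gm[measurable]: "g \<in> borel_measurable borel" using g by (simp add: L2_def)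
  define K1 where "K1 = Gtil_t \<rho> G t"
  define M2 where "M2 = (LINT u:{0..T}|lborel. 8 * \<rho>\<^sup>2) + 2 * M"
  have M20: "0 \<le> M2" unfolding M2_def using LINT_const_nonneg[of "8 * \<rho>\<^sup>2" T] M0 by simp
  have K1m: "(\<lambda>(s,u). K1 s u) \<in> borel_measurable borel"
    unfolding K1_def by (rule meas_Gtil_t[OF Gm])
  have K1Tm: "(\<lambda>(s,u). adjk K1 s u) \<in> borel_measurable borel"
    unfolding adjk_def by (rule meas_swap[OF K1m])
  have K1b: "\<And>s. s \<in> {0..T} \<Longrightarrow> (\<integral>\<^sup>+u\<in>{0..T}. ennreal ((K1 s u)\<^sup>2) \<partial>lborel) \<le> ennreal M2"
    unfolding M2_def K1_def
    by (rule row_bound_gen[OF Gm M0 rowG]) (auto intro: Gtil_t_sq[OF r])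
  have K1Tb: "\<And>s. s \<in> {0..T} \<Longrightarrow> (\<integral>\<^sup>+u\<in>{0..T}. ennreal ((adjk K1 s u)\<^sup>2) \<partial>lborel) \<le> ennreal M2"
    unfolding M2_def K1_def adjk_def
    by (rule row_bound_gen[OF GTm M0 colG']) (auto intro: Gtil_t_sq[OF r])
  define A where "A = kop T K1 f"
  define B where "B = kop T (adjk K1) f"
  define Cc where "Cc = kop T (adjk (one_t t)) (kop T (one_t t) f)"
  have Am[measurable]: "A \<in> borel_measurable borel" unfolding A_def by (rule kop_meas[OF K1m M20 K1b f])
  have Bm[measurable]: "B \<in> borel_measurable borel" unfolding B_def by (rule kop_meas[OF K1Tm M20 K1Tb f])
  have Cm[measurable]: "Cc \<in> borel_measurable borel"
  proof -
    define M1 :: real where "M1 = (LINT u:{0..T}|lborel. 1) + 2 * 0"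
    have M10: "0 \<le> M1" unfolding M1_def using LINT_one_nonneg by simp
    note op1 = one_t_props(1)[where t=t] and op2 = one_t_props(2)[where t=t]
    note op3 = one_t_props(3)[where t=t and T=T, folded M1_def]
    note op4 = one_t_props(4)[where t=t and T=T, folded M1_def]
    have "kop T (one_t t) f \<in> L2 T"
      by (rule bdd_L2[OF kop_meas[OF op1 M10 op3 f] kop_bound[OF op1 M10 op3 f]])
    from kop_meas[OF op2 M10 op4 this] show ?thesis unfolding Cc_def .
  qed
  have Ai: "set_integrable lborel {0..T} (\<lambda>s. A s * f s)"
    unfolding A_def by (rule bdd_mult_int[OF kop_meas[OF K1m M20 K1b f] kop_bound[OF K1m M20 K1b f] f])
  have Bi: "set_integrable lborel {0..T} (\<lambda>s. B s * f s)"
    unfolding B_def by (rule bdd_mult_int[OF kop_meas[OF K1Tm M20 K1Tb f] kop_bound[OF K1Tm M20 K1Tb f] f])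
  have Ci: "set_integrable lborel {0..T} (\<lambda>s. Cc s * f s)" and C0: "0 \<le> (LINT s:{0..T}|lborel. Cc s * f s)"
    unfolding Cc_def using C_part[OF f, of t] by auto
  have ffi: "set_integrable lborel {0..T} (\<lambda>s. f s * f s)" using L2_prod_int[OF f f] .
  have ggi: "set_integrable lborel {0..T} (\<lambda>s. g s * g s)" using L2_prod_int[OF g g] .
  have gfi: "set_integrable lborel {0..T} (\<lambda>s. g s * f s)" using L2_prod_int[OF f g] .
  \<comment> \<open>positivity of the Volterra part\<close>
  define h where "h = (\<lambda>x. if t \<le> x then f x else 0)"
  have hm[measurable]: "h \<in> borel_measurable borel" unfolding h_def by measurable
  have hL2: "h \<in> L2 T"
  proof -
    have "set_integrable lborel {0..T} (\<lambda>x. (h x)\<^sup>2)"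
      using L2_sq[OF f]
    proof (rule set_integrable_bound)
      show "set_borel_measurable lborel {0..T} (\<lambda>x. (h x)\<^sup>2)"
        unfolding set_borel_measurable_def by measurable
      show "AE x in lborel. x \<in> {0..T} \<longrightarrow> norm ((h x)\<^sup>2) \<le> norm ((f x)\<^sup>2)"
        by (auto intro!: AE_I2 simp: h_def)
    qed
    then show ?thesis unfolding L2_def by simp
  qed
  have vol: "\<And>a b. a \<in> {0..T} \<Longrightarrow> b \<in> {0..T} \<Longrightarrow> a \<le> b \<Longrightarrow> G a b = 0"
    using kc_volterra[OF kc] by blast
  have ABeq: "(LINT s:{0..T}|lborel. A s * f s) + (LINT s:{0..T}|lborel. B s * f s)
      = (LINT s:{0..T}|lborel. (LINT u:{0..T}|lborel. (Gtil \<rho> G s u + Gtil \<rho> G u s) * h u * h s))"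
  proof -
    have "(LINT s:{0..T}|lborel. A s * f s) + (LINT s:{0..T}|lborel. B s * f s)
        = (LINT s:{0..T}|lborel. A s * f s + B s * f s)"
      using Ai Bi by (simp add: set_integral_add(2))
    also have "\<dots> = (LINT s:{0..T}|lborel. (LINT u:{0..T}|lborel. (Gtil \<rho> G s u + Gtil \<rho> G u s) * h u * h s))"
    proof (rule set_lebesgue_integral_cong)
      show "\<forall>s. s \<in> {0..T} \<longrightarrow> A s * f s + B s * f s
          = (LINT u:{0..T}|lborel. (Gtil \<rho> G s u + Gtil \<rho> G u s) * h u * h s)"
      proof (intro allI impI)
        fix s assume s: "s \<in> {0..T}"
        have i1: "set_integrable lborel {0..T} (\<lambda>u. K1 s u * f u)" by (rule kop_int[OF K1m M20 K1b f s])
        have i2: "set_integrable lborel {0..T} (\<lambda>u. adjk K1 s u * f u)" by (rule kop_int[OF K1Tm M20 K1Tb f s])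
        have "A s * f s + B s * f s = (LINT u:{0..T}|lborel. K1 s u * f u * f s + adjk K1 s u * f u * f s)"
          unfolding A_def B_def kop_def
          using set_integral_add(2)[OF set_integrable_mult_left[OF i1, of "f s"] set_integrable_mult_left[OF i2, of "f s"]]
          by simp
        also have "\<dots> = (LINT u:{0..T}|lborel. (Gtil \<rho> G s u + Gtil \<rho> G u s) * h u * h s)"
        proof (rule set_lebesgue_integral_cong)
          show "\<forall>u. u \<in> {0..T} \<longrightarrow> K1 s u * f u * f s + adjk K1 s u * f u * f s
              = (Gtil \<rho> G s u + Gtil \<rho> G u s) * h u * h s"
            using pw_id[OF vol s, where \<rho>=\<rho> and t=t and f=f] unfolding K1_def adjk_def h_def
            by (auto simp: algebra_simps)
        qed simp
        finally show "A s * f s + B s * f s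
          = (LINT u:{0..T}|lborel. (Gtil \<rho> G s u + Gtil \<rho> G u s) * h u * h s)" .
      qed
    qed simp
    finally show ?thesis .
  qed
  have AB0: "0 \<le> (LINT s:{0..T}|lborel. A s * f s) + (LINT s:{0..T}|lborel. B s * f s)"
    unfolding ABeq by (rule Q_nonneg[OF kc r hL2])
  have "(LINT s:{0..T}|lborel. g s * f s) = (LINT s:{0..T}|lborel. D_op T lam \<phi> \<rho> G t f s * f s)"
  proof (rule set_lebesgue_integral_cong_AE)
    show "AE x\<in>{0..T} in lborel. g x * f x = D_op T lam \<phi> \<rho> G t f x * f x"
      using ae unfolding ae_eq_def by eventually_elim auto
    have "D_op T lam \<phi> \<rho> G t f = (\<lambda>s. 2 * lam * f s + A s + B s + 2 * \<phi> * Cc s)"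
      unfolding D_op_def A_def B_def Cc_def K1_def ..
    then show "(\<lambda>x. D_op T lam \<phi> \<rho> G t f x * f x) \<in> borel_measurable lborel"
      by simp
  qed measurable
  also have "\<dots> = (LINT s:{0..T}|lborel. 2 * lam * (f s * f s) + A s * f s + B s * f s + 2 * \<phi> * (Cc s * f s))"
    by (rule set_lebesgue_integral_cong) (auto simp: D_op_def A_def B_def Cc_def K1_def algebra_simps)
  also have "\<dots> = 2 * lam * (LINT s:{0..T}|lborel. f s * f s) + (LINT s:{0..T}|lborel. A s * f s)
      + (LINT s:{0..T}|lborel. B s * f s) + 2 * \<phi> * (LINT s:{0..T}|lborel. Cc s * f s)"
    using ffi Ai Bi Ci
    by (simp add: set_integral_add(2) set_integral_add(1) set_integrable_mult_right)
  finally have energy: "(LINT s:{0..T}|lborel. g s * f s) = 2 * lam * (LINT s:{0..T}|lborel. f s * f s)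
      + ((LINT s:{0..T}|lborel. A s * f s) + (LINT s:{0..T}|lborel. B s * f s))
      + 2 * \<phi> * (LINT s:{0..T}|lborel. Cc s * f s)" by simp
  define X where "X = (LINT s:{0..T}|lborel. (f s)\<^sup>2)"
  define Y where "Y = (LINT s:{0..T}|lborel. (g s)\<^sup>2)"
  have X0: "0 \<le> X" unfolding X_def set_lebesgue_integral_def by (rule integral_nonneg_AE) (auto intro!: AE_I2)
  have Y0: "0 \<le> Y" unfolding Y_def set_lebesgue_integral_def by (rule integral_nonneg_AE) (auto intro!: AE_I2)
  have ffX: "(LINT s:{0..T}|lborel. f s * f s) = X" unfolding X_def by (simp add: power2_eq_square)
  have low: "2 * lam * X \<le> (LINT s:{0..T}|lborel. g s * f s)"
    using energy AB0 C0 ph unfolding ffX by (smt (verit) mult_nonneg_nonneg)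
  have "(LINT s:{0..T}|lborel. g s * f s) \<le> (LINT s:{0..T}|lborel. lam * (f s)\<^sup>2 + (g s)\<^sup>2 / (4 * lam))"
    using gfi
  proof (rule set_integral_mono)
    show "set_integrable lborel {0..T} (\<lambda>s. lam * (f s)\<^sup>2 + (g s)\<^sup>2 / (4 * lam))"
      using L2_sq[OF f] L2_sq[OF g] by (intro set_integral_add(1) set_integrable_mult_right set_integrable_divide) auto
    show "\<And>s. s \<in> {0..T} \<Longrightarrow> g s * f s \<le> lam * (f s)\<^sup>2 + (g s)\<^sup>2 / (4 * lam)"
      by (rule gf_le[OF lam])
  qed
  also have "\<dots> = lam * X + Y / (4 * lam)"
    unfolding X_def Y_def using L2_sq[OF f] L2_sq[OF g]
    by (simp add: set_integral_add(2) set_integrable_mult_right set_integrable_divide)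
  finally have "2 * lam * X \<le> lam * X + Y / (4 * lam)" using low by linarith
  then have "lam * X \<le> Y / (4 * lam)" by (simp add: mult.commute)
  then have "X \<le> Y / (4 * lam\<^sup>2)" using lam by (simp add: field_simps power2_eq_square)
  then have "sqrt X \<le> sqrt (Y / (4 * lam\<^sup>2))" by (rule real_sqrt_le_mono)
  also have "sqrt (Y / (4 * lam\<^sup>2)) = 1 / (2 * lam) * sqrt Y"
    using lam by (simp add: real_sqrt_divide real_sqrt_mult)
  finally show "L2norm T f \<le> 1 / (2 * lam) * L2norm T g"
    unfolding L2norm_def X_def Y_def .
qed

end
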